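(* Let $\Lambda$ be a $k$-graph with no sources, $S$ a semigroup, $\eta:\Lambda\to S$ a functor and $\Lambda\times_\eta S$ the associated skew product graph. Then the system $(\Lambda,S,\eta)$ is cofinal if and only if $\Lambda\times_\eta S$ is cofinal.
   Context: All semigroups are countable, cancellative, with identity. A $k$-graph is a countable category $\Lambda$ with a functor $d:\Lambda\to\mathbb{N}^k$ with unique factorisation; $\Lambda^n=d^{-1}(n)$, $\Lambda^0$ = vertices, $uXv=\{\lambda\in X:r(\lambda)=u,s(\lambda)=v\}$; no sources: $v\Lambda^n\ne\emptyset$ for $n\ne0$. The skew product $\Lambda\times_\eta S$ has vertices $\Lambda^0\times S$, morphisms $\Lambda\times S$, $r(\lambda,t)=(r(\lambda),t)$, $s(\lambda,t)=(s(\lambda),t\eta(\lambda))$, $(\lambda,t)(\mu,t\eta(\lambda))=(\lambda\mu,t)$, $d(\lambda,t)=d(\lambda)$. A $k$-graph $\Gamma$ is cofinal if for all $v,w\in\Gamma^0$ there is $N\in\mathbb{N}^k$ with $v\Gamma s(\alpha)\ne\emptyset$ for all $\alpha\in w\Gamma^N$. The system $(\Lambda,S,\eta)$ is cofinal if for all $v,w\in\Lambda^0$ and $a,b\in S$ there is $N\in\mathbb{N}^k$ such that for all $\alpha\in w\Lambda^N$ there is $\beta\in v\Lambda s(\alpha)$ with $a\eta(\beta)=b\eta(\alpha)$. *)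

theory Defs
  imports Main "HOL-Library.Countable_Set" "HOL-Library.Function_Algebras"
begin

text \<open>Degrees in N^k are represented as functions nat => nat vanishing at indices >= k.
  Vertices are identified with the identity morphisms, i.e. Lambda^0 = d^{-1}(0).\<close>

definition degs :: "nat \<Rightarrow> (nat \<Rightarrow> nat) set" where
  "degs k = {n. \<forall>i\<ge>k. n i = 0}"

record 'm kgraph =
  Mor :: "'m set"
  rng :: "'m \<Rightarrow> 'm"
  src :: "'m \<Rightarrow> 'm"
  cmp :: "'m \<Rightarrow> 'm \<Rightarrow> 'm"
  deg :: "'m \<Rightarrow> nat \<Rightarrow> nat"

definition verts :: "'m kgraph \<Rightarrow> 'm set" where
  "verts G = {v \<in> Mor G. deg G v = 0}"

definition is_kgraph :: "nat \<Rightarrow> 'm kgraph \<Rightarrow> bool" where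
  "is_kgraph k G \<longleftrightarrow>
     countable (Mor G) \<and>
     (\<forall>l\<in>Mor G. rng G l \<in> Mor G \<and> src G l \<in> Mor G \<and>
        rng G (rng G l) = rng G l \<and> src G (rng G l) = rng G l \<and>
        rng G (src G l) = src G l \<and> src G (src G l) = src G l) \<and>
     (\<forall>l\<in>Mor G. \<forall>m\<in>Mor G. src G l = rng G m \<longrightarrow>
        cmp G l m \<in> Mor G \<and> rng G (cmp G l m) = rng G l \<and> src G (cmp G l m) = src G m) \<and>
     (\<forall>l\<in>Mor G. \<forall>m\<in>Mor G. \<forall>n\<in>Mor G. src G l = rng G m \<and> src G m = rng G n \<longrightarrow>
        cmp G (cmp G l m) n = cmp G l (cmp G m n)) \<and>
     (\<forall>l\<in>Mor G. cmp G (rng G l) l = l \<and> cmp G l (src G l) = l) \<and>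
     (\<forall>l\<in>Mor G. deg G l \<in> degs k) \<and>
     (\<forall>l\<in>Mor G. \<forall>m\<in>Mor G. src G l = rng G m \<longrightarrow>
        deg G (cmp G l m) = deg G l + deg G m) \<and>
     (\<forall>l\<in>Mor G. \<forall>p q. deg G l = p + q \<longrightarrow>
        (\<exists>!(a, b). a \<in> Mor G \<and> b \<in> Mor G \<and> src G a = rng G b \<and>
            deg G a = p \<and> deg G b = q \<and> cmp G a b = l))"

definition no_sources :: "nat \<Rightarrow> 'm kgraph \<Rightarrow> bool" where
  "no_sources k G \<longleftrightarrow> (\<forall>v\<in>verts G. \<forall>n\<in>degs k. n \<noteq> 0 \<longrightarrow>
     (\<exists>l\<in>Mor G. rng G l = v \<and> deg G l = n))"

definition kgraph_cofinal :: "nat \<Rightarrow> 'm kgraph \<Rightarrow> bool" where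
  "kgraph_cofinal k G \<longleftrightarrow> (\<forall>v\<in>verts G. \<forall>w\<in>verts G. \<exists>N\<in>degs k.
     \<forall>a\<in>Mor G. rng G a = w \<and> deg G a = N \<longrightarrow>
       (\<exists>l\<in>Mor G. rng G l = v \<and> src G l = src G a))"

definition is_functor_to_monoid :: "'m kgraph \<Rightarrow> ('m \<Rightarrow> 's::monoid_mult) \<Rightarrow> bool" where
  "is_functor_to_monoid G eta \<longleftrightarrow>
     (\<forall>v\<in>verts G. eta v = 1) \<and>
     (\<forall>l\<in>Mor G. \<forall>m\<in>Mor G. src G l = rng G m \<longrightarrow> eta (cmp G l m) = eta l * eta m)"

text \<open>countable cancellative semigroup with identity, given as the whole type 's\<close>
definition cancellative_countable_monoid :: "'s::monoid_mult itself \<Rightarrow> bool" where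
  "cancellative_countable_monoid _ \<longleftrightarrow> countable (UNIV :: 's set) \<and>
     (\<forall>a b c::'s. a * b = a * c \<longrightarrow> b = c) \<and> (\<forall>a b c::'s. b * a = c * a \<longrightarrow> b = c)"

definition skew_product :: "'m kgraph \<Rightarrow> ('m \<Rightarrow> 's::monoid_mult) \<Rightarrow> ('m \<times> 's) kgraph" where
  "skew_product G eta =
     \<lparr> Mor = Mor G \<times> UNIV,
       rng = (\<lambda>(l, t). (rng G l, t)),
       src = (\<lambda>(l, t). (src G l, t * eta l)),
       cmp = (\<lambda>(l, t) (m, t'). (cmp G l m, t)),
       deg = (\<lambda>(l, t). deg G l) \<rparr>"

definition system_cofinal :: "nat \<Rightarrow> 'm kgraph \<Rightarrow> ('m \<Rightarrow> 's::monoid_mult) \<Rightarrow> bool" where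
  "system_cofinal k G eta \<longleftrightarrow> (\<forall>v\<in>verts G. \<forall>w\<in>verts G. \<forall>a b::'s. \<exists>N\<in>degs k.
     \<forall>al\<in>Mor G. rng G al = w \<and> deg G al = N \<longrightarrow>
       (\<exists>be\<in>Mor G. rng G be = v \<and> src G be = src G al \<and> a * eta be = b * eta al))"

end

theory Submission
  imports Defs
begin

lemma verts_skew: "verts (skew_product G eta) = verts G \<times> UNIV"
  by (auto simp: verts_def skew_product_def)

theorem proposition4p11:
  fixes k :: nat and G :: "'m kgraph" and eta :: "'m \<Rightarrow> 's::monoid_mult"
  assumes "is_kgraph k G"
    and "no_sources k G"
    and "cancellative_countable_monoid TYPE('s)"
    and "is_functor_to_monoid G eta"
  shows "system_cofinal k G eta \<longleftrightarrow> kgraph_cofinal k (skew_product G eta)"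
proof
  assume H: "system_cofinal k G eta"
  show "kgraph_cofinal k (skew_product G eta)"
    unfolding kgraph_cofinal_def verts_skew
  proof (intro ballI)
    fix va wb assume va: "va \<in> verts G \<times> (UNIV::'s set)" and wb: "wb \<in> verts G \<times> (UNIV::'s set)"
    obtain v a where [simp]: "va = (v,a)" by (cases va)
    obtain w b where [simp]: "wb = (w,b)" by (cases wb)
    from H obtain N where N: "N \<in> degs k" and
      P: "\<forall>al\<in>Mor G. rng G al = w \<and> deg G al = N \<longrightarrow>
       (\<exists>be\<in>Mor G. rng G be = v \<and> src G be = src G al \<and> a * eta be = b * eta al)"
      using va wb unfolding system_cofinal_def by (metis \<open>va = (v,a)\<close> \<open>wb = (w,b)\<close> mem_Times_iff fst_conv snd_conv)
    show "\<exists>N\<in>degs k. \<forall>x\<in>Mor (skew_product G eta).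
            rng (skew_product G eta) x = wb \<and> deg (skew_product G eta) x = N \<longrightarrow>
            (\<exists>l\<in>Mor (skew_product G eta). rng (skew_product G eta) l = va \<and>
               src (skew_product G eta) l = src (skew_product G eta) x)"
    proof (intro bexI[OF _ N] ballI impI)
      fix x assume x: "x \<in> Mor (skew_product G eta)"
        and hx: "rng (skew_product G eta) x = wb \<and> deg (skew_product G eta) x = N"
      obtain al t where [simp]: "x = (al,t)" by (cases x)
      from x hx have "al \<in> Mor G" "rng G al = w" "t = b" "deg G al = N"
        by (auto simp: skew_product_def)
      with P obtain be where "be \<in> Mor G" "rng G be = v" "src G be = src G al"
        "a * eta be = b * eta al" by blast
      thus "\<exists>l\<in>Mor (skew_product G eta). rng (skew_product G eta) l = va \<and>
               src (skew_product G eta) l = src (skew_product G eta) x"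
        using \<open>t = b\<close> by (intro bexI[of _ "(be,a)"]) (auto simp: skew_product_def)
    qed
  qed
next
  assume H: "kgraph_cofinal k (skew_product G eta)"
  show "system_cofinal k G eta"
    unfolding system_cofinal_def
  proof (intro ballI allI)
    fix v w a b assume v: "v \<in> verts G" and w: "w \<in> verts G"
    have "(v,a) \<in> verts (skew_product G eta)" "(w,b) \<in> verts (skew_product G eta)"
      using v w by (auto simp: verts_skew)
    with H obtain N where N: "N \<in> degs k" and
      P: "\<forall>x\<in>Mor (skew_product G eta).
            rng (skew_product G eta) x = (w,b) \<and> deg (skew_product G eta) x = N \<longrightarrow>
            (\<exists>l\<in>Mor (skew_product G eta). rng (skew_product G eta) l = (v,a) \<and>
               src (skew_product G eta) l = src (skew_product G eta) x)"
      unfolding kgraph_cofinal_def by blast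
    show "\<exists>N\<in>degs k. \<forall>al\<in>Mor G. rng G al = w \<and> deg G al = N \<longrightarrow>
       (\<exists>be\<in>Mor G. rng G be = v \<and> src G be = src G al \<and> a * eta be = b * eta al)"
    proof (intro bexI[OF _ N] ballI impI)
      fix al assume al: "al \<in> Mor G" and h: "rng G al = w \<and> deg G al = N"
      have "(al,b) \<in> Mor (skew_product G eta)" using al by (simp add: skew_product_def)
      moreover have "rng (skew_product G eta) (al,b) = (w,b) \<and> deg (skew_product G eta) (al,b) = N"
        using h by (simp add: skew_product_def)
      ultimately obtain l where l: "l \<in> Mor (skew_product G eta)"
        "rng (skew_product G eta) l = (v,a)"
        "src (skew_product G eta) l = src (skew_product G eta) (al,b)"
        using P by blast
      obtain be s where [simp]: "l = (be,s)" by (cases l)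
      from l show "\<exists>be\<in>Mor G. rng G be = v \<and> src G be = src G al \<and> a * eta be = b * eta al"
        by (auto simp: skew_product_def)
    qed
  qed
qed

end
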